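(* Let $k$ be a field, $(C,\Delta)$ a coassociative coalgebra, $(L,\phi)$ a Lie algebra and $B$ a Lie module over $L$ via $\psi:L\otimes B\to B$. Let $n\ge 0$ and $f\in Alt^n(L,B)$, with induced map $F$. Then $\delta F$ (defined below) equals the map $Hom(C,L)^{\otimes(n+1)}\to Hom(C,B)$ induced by $df\in Alt^{n+1}(L,B)$; in particular $\delta F$ is TD skew symmetric, so $\delta$ maps $TDalt^n(Hom(C,L),Hom(C,B))$ into $TDalt^{n+1}(Hom(C,L),Hom(C,B))$.
   Context: Iterated coproduct $\Delta^{(m-1)}:C\to C^{\otimes m}$ ($\Delta^{(0)}=\mathrm{id}$, $\Delta^{(m-1)}=(\Delta\otimes1\otimes\dots\otimes1)\circ\Delta^{(m-2)}$), written $\sum c_{(1)}\otimes\dots\otimes c_{(m)}$. $S_m$ acts on $m$-fold tensor products by $\sigma(x_1\otimes\dots\otimes x_m)=x_{\sigma(1)}\otimes\dots\otimes x_{\sigma(m)}$. For $\chi:X_1\otimes\dots\otimes X_m\to Y$, the induced map sends $f_1\otimes\dots\otimes f_m$ ($f_j\in Hom(C,X_j)$) to $\chi\circ(f_1\otimes\dots\otimes f_m)\circ\Delta^{(m-1)}$. A map $G:Hom(C,L)^{\otimes m}\to Hom(C,B)$ induced by $\chi$ is TD skew if $G\circ\sigma=(-1)^\sigma G^{\sigma^{-1}}$ for all $\sigma\in S_m$, where $G^\sigma(f_1\otimes\dots\otimes f_m)=\chi\circ(f_1\otimes\dots\otimes f_m)\circ\sigma\circ\Delta^{(m-1)}$.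 $Alt^n(L,B)$ is the space of skew symmetric linear maps $L^{\otimes n}\to B$, with $Alt^0(L,B)=B$; the Chevalley–Eilenberg differential is $df(x_1,\dots,x_{n+1})=\sum_{i=1}^{n+1}(-1)^{i+1}\psi(x_i,f(x_1,\dots,\hat{x_i},\dots,x_{n+1}))+\sum_{j<k}(-1)^{j+k}f(\phi(x_j,x_k),x_1,\dots,\hat{x_j},\dots,\hat{x_k},\dots,x_{n+1})$. $TDalt^n(Hom(C,L),Hom(C,B))$ is the space of TD skew maps $Hom(C,L)^{\otimes n}\to Hom(C,B)$ (for $n=0$ identified with $B$). Let $\Phi,\Psi$ be the maps induced by $\phi,\psi$ and $F$ the map induced by $f$. For $\sigma\in S_{n+1}$ define $(\Psi\circ(1\otimes F))^{\sigma}(g_1\otimes\dots\otimes g_{n+1})(c)=\sum\psi\big(g_1(c_{(\sigma(1))}),f(g_2(c_{(\sigma(2))})\otimes\dots\otimes g_{n+1}(c_{(\sigma(n+1))}))\big)$ and, for $n\ge1$, $(F\circ(\Phi\otimes1))^{\sigma}(g_1\otimes\dots\otimes g_{n+1})(c)=\sum f\big(\phi(g_1(c_{(\sigma(1))}),g_2(c_{(\sigma(2))}))\otimes g_3(c_{(\sigma(3))})\otimes\dots\otimes g_{n+1}(c_{(\sigma(n+1))})\big)$. A $(p,q)$-unshuffle is $\sigma\in S_{p+q}$ with $\sigma(1)<\dots<\sigma(p)$ and $\sigma(p+1)<\dots<\sigma(p+q)$. Define $$\delta F=\sum_{\sigma}(-1)^{\sigma}(\Psi\circ(1\otimes F))^{\sigma}\circ\sigma-\sum_{\sigma'}(-1)^{\sigma'}(F\circ(\Phi\otimes1))^{\sigma'}\circ\sigma',$$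 $\sigma$ over $(1,n)$-unshuffles, $\sigma'$ over $(2,n-1)$-unshuffles (the second sum is empty for $n=0$), and $\sigma$ acting on $Hom(C,L)^{\otimes(n+1)}$ by permuting factors. For $n=0$ this reads $(\delta F)(g)(c)=\psi(g(c),f)$. *)

theory Defs
  imports Complex_Main "HOL-Combinatorics.Permutations"
begin

text \<open>Elements of
m-fold tensor products are handled through pure tensors, written as lists of
length m; multilinear maps on m-tuples (i.e. linear maps out of the m-fold
tensor product) are functions on lists of length m.  Indices are 0-based.\<close>

definition multilin ::
  "('k::field \<Rightarrow> 'a::ab_group_add \<Rightarrow> 'a) \<Rightarrow> ('k \<Rightarrow> 'b::ab_group_add \<Rightarrow> 'b)
     \<Rightarrow> nat \<Rightarrow> ('a list \<Rightarrow> 'b) \<Rightarrow> bool" where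
  "multilin s1 s2 m h \<longleftrightarrow>
     (\<forall>xs ys. length xs + length ys + 1 = m \<longrightarrow> Vector_Spaces.linear s1 s2 (\<lambda>v. h (xs @ v # ys)))"

definition bilin ::
  "('k::field \<Rightarrow> 'a::ab_group_add \<Rightarrow> 'a) \<Rightarrow> ('k \<Rightarrow> 'b::ab_group_add \<Rightarrow> 'b)
     \<Rightarrow> ('k \<Rightarrow> 'c::ab_group_add \<Rightarrow> 'c) \<Rightarrow> ('a \<Rightarrow> 'b \<Rightarrow> 'c) \<Rightarrow> bool" where
  "bilin s1 s2 s3 h \<longleftrightarrow> (\<forall>x. Vector_Spaces.linear s2 s3 (h x)) \<and> (\<forall>y. Vector_Spaces.linear s1 s3 (\<lambda>x. h x y))"

definition lie_algebra ::
  "('k::field \<Rightarrow> 'l::ab_group_add \<Rightarrow> 'l) \<Rightarrow> ('l \<Rightarrow> 'l \<Rightarrow> 'l) \<Rightarrow> bool" where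
  "lie_algebra sL \<phi> \<longleftrightarrow> vector_space sL \<and> bilin sL sL sL \<phi> \<and> (\<forall>x. \<phi> x x = 0) \<and>
     (\<forall>x y z. \<phi> x (\<phi> y z) + \<phi> y (\<phi> z x) + \<phi> z (\<phi> x y) = 0)"

definition lie_module ::
  "('k::field \<Rightarrow> 'l::ab_group_add \<Rightarrow> 'l) \<Rightarrow> ('k \<Rightarrow> 'b::ab_group_add \<Rightarrow> 'b)
     \<Rightarrow> ('l \<Rightarrow> 'l \<Rightarrow> 'l) \<Rightarrow> ('l \<Rightarrow> 'b \<Rightarrow> 'b) \<Rightarrow> bool" where
  "lie_module sL sB \<phi> \<psi> \<longleftrightarrow> vector_space sB \<and> bilin sL sB sB \<psi> \<and>
     (\<forall>x y b. \<psi> (\<phi> x y) b = \<psi> x (\<psi> y b) - \<psi> y (\<psi> x b))"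

text \<open>The coproduct is given by a chosen Sweedler representative
\<open>\<Delta> c = [(c1_1, c2_1), ...]\<close> standing for \<open>\<Sum>i c1_i \<otimes> c2_i \<in> C \<otimes> C\<close>.
Over a field, elements of a tensor product are separated by multilinear forms
with values in k, so linearity of Delta and coassociativity are stated by testing
against bilinear resp. trilinear forms C x C (x C) -> k.\<close>

definition coassoc_coalgebra ::
  "('k::field \<Rightarrow> 'c::ab_group_add \<Rightarrow> 'c) \<Rightarrow> ('c \<Rightarrow> ('c \<times> 'c) list) \<Rightarrow> bool" where
  "coassoc_coalgebra sC \<Delta> \<longleftrightarrow> vector_space sC \<and>
     (\<forall>\<beta>::'c list \<Rightarrow> 'k. multilin sC (*) 2 \<beta> \<longrightarrow>
        Vector_Spaces.linear sC (*) (\<lambda>c. \<Sum>(a, b)\<leftarrow>\<Delta> c. \<beta> [a, b])) \<and>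
     (\<forall>\<tau>::'c list \<Rightarrow> 'k. multilin sC (*) 3 \<tau> \<longrightarrow> (\<forall>c.
        (\<Sum>(a, b)\<leftarrow>\<Delta> c. \<Sum>(a1, a2)\<leftarrow>\<Delta> a. \<tau> [a1, a2, b]) =
        (\<Sum>(a, b)\<leftarrow>\<Delta> c. \<Sum>(b1, b2)\<leftarrow>\<Delta> b. \<tau> [a, b1, b2])))"

text \<open>Iterated coproduct: \<open>iter_coprod \<Delta> m c\<close> represents \<open>\<Delta>^(m) c \<in> C^{\<otimes>(m+1)}\<close>
(so \<open>\<Delta>^(0) = id\<close>, \<open>\<Delta>^(m+1) = (\<Delta> \<otimes> 1 \<otimes> ... \<otimes> 1) \<circ> \<Delta>^(m)\<close>), as a list of
(m+1)-tuples \<open>[c_(1), ..., c_(m+1)]\<close>.\<close>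

fun iter_coprod :: "('c \<Rightarrow> ('c \<times> 'c) list) \<Rightarrow> nat \<Rightarrow> 'c \<Rightarrow> 'c list list" where
  "iter_coprod \<Delta> 0 c = [[c]]"
| "iter_coprod \<Delta> (Suc m) c =
     concat (map (\<lambda>t. map (\<lambda>(a, b). a # b # tl t) (\<Delta> (hd t))) (iter_coprod \<Delta> m c))"

definition Alt ::
  "('k::field \<Rightarrow> 'l::ab_group_add \<Rightarrow> 'l) \<Rightarrow> ('k \<Rightarrow> 'b::ab_group_add \<Rightarrow> 'b)
     \<Rightarrow> nat \<Rightarrow> ('l list \<Rightarrow> 'b) \<Rightarrow> bool" where
  "Alt sL sB n f \<longleftrightarrow> multilin sL sB n f \<and>
     (\<forall>xs \<sigma>. length xs = n \<longrightarrow> \<sigma> permutes {..<n} \<longrightarrow>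
        f (permute_list \<sigma> xs) = sB (of_int (sign \<sigma>)) (f xs))"

text \<open>Chevalley--Eilenberg differential (0-based indices; the paper's signs
\<open>(-1)^(i+1)\<close> and \<open>(-1)^(j+k)\<close> for 1-based indices become \<open>(-1)^i\<close>, \<open>(-1)^(j+k)\<close>).\<close>

definition CE_d ::
  "('k::field \<Rightarrow> 'b::ab_group_add \<Rightarrow> 'b) \<Rightarrow> ('l \<Rightarrow> 'l \<Rightarrow> 'l) \<Rightarrow> ('l \<Rightarrow> 'b \<Rightarrow> 'b)
     \<Rightarrow> ('l list \<Rightarrow> 'b) \<Rightarrow> 'l list \<Rightarrow> 'b" where
  "CE_d sB \<phi> \<psi> f xs =
     (\<Sum>i<length xs. sB ((-1) ^ i) (\<psi> (xs ! i) (f (nths xs (- {i}))))) +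
     (\<Sum>k<length xs. \<Sum>j<k.
        sB ((-1) ^ (j + k)) (f (\<phi> (xs ! j) (xs ! k) # nths xs (- {j, k}))))"

text \<open>Maps \<open>Hom(C,L)^{\<otimes>m} \<rightarrow> Hom(C,B)\<close> are represented by their values on pure
tensors \<open>g_1 \<otimes> ... \<otimes> g_m\<close>, i.e. functions on lists of (linear) maps C -> L.
\<open>twisted \<Delta> \<chi> \<sigma> gs\<close> is \<open>G^\<sigma>\<close>: \<open>c \<mapsto> \<Sum> \<chi>(g_1(c_(\<sigma>(1))) \<otimes> ... \<otimes> g_m(c_(\<sigma>(m))))\<close>.\<close>

definition induced ::
  "('c \<Rightarrow> ('c \<times> 'c) list) \<Rightarrow> ('l list \<Rightarrow> 'b::comm_monoid_add)
     \<Rightarrow> ('c \<Rightarrow> 'l) list \<Rightarrow> 'c \<Rightarrow> 'b" where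
  "induced \<Delta> \<chi> gs c =
     (\<Sum>ts\<leftarrow>iter_coprod \<Delta> (length gs - 1) c. \<chi> (map (\<lambda>i. (gs ! i) (ts ! i)) [0..<length gs]))"

definition twisted ::
  "('c \<Rightarrow> ('c \<times> 'c) list) \<Rightarrow> ('l list \<Rightarrow> 'b::comm_monoid_add) \<Rightarrow> (nat \<Rightarrow> nat)
     \<Rightarrow> ('c \<Rightarrow> 'l) list \<Rightarrow> 'c \<Rightarrow> 'b" where
  "twisted \<Delta> \<chi> \<sigma> gs c =
     (\<Sum>ts\<leftarrow>iter_coprod \<Delta> (length gs - 1) c.
        \<chi> (map (\<lambda>i. (gs ! i) (ts ! \<sigma> i)) [0..<length gs]))"

definition TD_skew ::
  "('k::field \<Rightarrow> 'c::ab_group_add \<Rightarrow> 'c) \<Rightarrow> ('k \<Rightarrow> 'l::ab_group_add \<Rightarrow> 'l)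
     \<Rightarrow> ('k \<Rightarrow> 'b::ab_group_add \<Rightarrow> 'b) \<Rightarrow> ('c \<Rightarrow> ('c \<times> 'c) list) \<Rightarrow> nat
     \<Rightarrow> ('l list \<Rightarrow> 'b) \<Rightarrow> (('c \<Rightarrow> 'l) list \<Rightarrow> 'c \<Rightarrow> 'b) \<Rightarrow> bool" where
  "TD_skew sC sL sB \<Delta> m \<chi> G \<longleftrightarrow> multilin sL sB m \<chi> \<and>
     (\<forall>gs. length gs = m \<longrightarrow> (\<forall>g\<in>set gs. Vector_Spaces.linear sC sL g) \<longrightarrow>
        (\<forall>c. G gs c = induced \<Delta> \<chi> gs c) \<and>
        (\<forall>\<sigma>. \<sigma> permutes {..<m} \<longrightarrow> (\<forall>c.
           G (permute_list \<sigma> gs) c = sB (of_int (sign \<sigma>)) (twisted \<Delta> \<chi> (inv \<sigma>) gs c))))"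

definition unshuffles :: "nat \<Rightarrow> nat \<Rightarrow> (nat \<Rightarrow> nat) set" where
  "unshuffles p q = {\<sigma>. \<sigma> permutes {..<p + q} \<and>
     (\<forall>i j. i < j \<and> j < p \<longrightarrow> \<sigma> i < \<sigma> j) \<and>
     (\<forall>i j. p \<le> i \<and> i < j \<and> j < p + q \<longrightarrow> \<sigma> i < \<sigma> j)}"

text \<open>Here \<open>(X^\<sigma> \<circ> \<sigma>)(gs) = X^\<sigma>(permute_list \<sigma> gs)\<close>.\<close>

definition delta_F ::
  "('k::field \<Rightarrow> 'b::ab_group_add \<Rightarrow> 'b) \<Rightarrow> ('c \<Rightarrow> ('c \<times> 'c) list)
     \<Rightarrow> ('l \<Rightarrow> 'l \<Rightarrow> 'l) \<Rightarrow> ('l \<Rightarrow> 'b \<Rightarrow> 'b) \<Rightarrow> nat \<Rightarrow> ('l list \<Rightarrow> 'b)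
     \<Rightarrow> ('c \<Rightarrow> 'l) list \<Rightarrow> 'c \<Rightarrow> 'b" where
  "delta_F sB \<Delta> \<phi> \<psi> n f gs c =
     (\<Sum>\<sigma>\<in>unshuffles 1 n. sB (of_int (sign \<sigma>))
        (twisted \<Delta> (\<lambda>ys. \<psi> (hd ys) (f (tl ys))) \<sigma> (permute_list \<sigma> gs) c)) -
     (if n = 0 then 0 else
      (\<Sum>\<sigma>\<in>unshuffles 2 (n - 1). sB (of_int (sign \<sigma>))
        (twisted \<Delta> (\<lambda>ys. f (\<phi> (ys ! 0) (ys ! 1) # drop 2 ys)) \<sigma> (permute_list \<sigma> gs) c)))"

end

theory Submission
  imports Defs
begin


definition rm1 :: "'a list \<Rightarrow> nat \<Rightarrow> 'a list" where
  "rm1 xs i = take i xs @ drop (Suc i) xs"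

lemma rm1_Cons0 [simp]: "rm1 (x # xs) 0 = xs" by (simp add: rm1_def)
lemma rm1_ConsSuc [simp]: "rm1 (x # xs) (Suc i) = x # rm1 xs i" by (simp add: rm1_def)
lemma rm1_append: "rm1 (a @ b) i = (if i < length a then rm1 a i @ b else a @ rm1 b (i - length a))"
  by (auto simp: rm1_def Suc_diff_le)
lemma length_rm1 [simp]: "i < length xs \<Longrightarrow> length (rm1 xs i) = length xs - 1"
  by (simp add: rm1_def)
lemma nth_rm1: "i < length xs \<Longrightarrow> l < length xs - 1 \<Longrightarrow> rm1 xs i ! l = (if l < i then xs ! l else xs ! Suc l)"
  by (auto simp: rm1_def nth_append min_def)

lemma nths_rm1: "nths xs (- {i}) = rm1 xs i"
proof (induction xs arbitrary: i)
  case Nil then show ?case by (simp add: rm1_def)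
next
  case (Cons x xs)
  show ?case
  proof (cases i)
    case 0
    have "{j. Suc j \<in> - {i}} = UNIV" using 0 by auto
    then show ?thesis using 0 by (simp add: nths_Cons nths_all)
  next
    case (Suc i')
    have "{j. Suc j \<in> - {i}} = - {i'}" using Suc by auto
    then show ?thesis using Suc Cons by (simp add: nths_Cons)
  qed
qed

lemma nths_rm2: "j < k \<Longrightarrow> nths xs (- {j, k}) = rm1 (rm1 xs k) j"
proof (induction xs arbitrary: j k)
  case Nil then show ?case by (simp add: rm1_def)
next
  case (Cons x xs)
  obtain k' where k: "k = Suc k'" using Cons.prems by (cases k) auto
  show ?case
  proof (cases j)
    case 0
    have "{l. Suc l \<in> - {j, k}} = - {k'}" using 0 k by auto
    then show ?thesis using 0 k by (simp add: nths_Cons nths_rm1)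
  next
    case (Suc j')
    have "{l. Suc l \<in> - {j, k}} = - {j', k'}" using Suc k by auto
    then show ?thesis using Suc k Cons by (simp add: nths_Cons)
  qed
qed

lemma permute_adj: "length a = i \<Longrightarrow>
   permute_list (Transposition.transpose i (Suc i)) (a @ u # v # b) = a @ v # u # b"
proof (rule nth_equalityI)
  assume i: "length a = i"
  have p: "Transposition.transpose i (Suc i) permutes {..<length (a @ u # v # b)}"
    using i by (intro permutes_swap_id) auto
  fix l assume "l < length (permute_list (Transposition.transpose i (Suc i)) (a @ u # v # b))"
  then have l: "l < length (a @ u # v # b)" by simp
  show "permute_list (Transposition.transpose i (Suc i)) (a @ u # v # b) ! l = (a @ v # u # b) ! l"
    using i l
  proof -
    have "permute_list (Transposition.transpose i (Suc i)) (a @ u # v # b) ! l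
        = (a @ u # v # b) ! (Transposition.transpose i (Suc i) l)"
      by (rule permute_list_nth[OF p l])
    moreover have "(a @ u # v # b) ! (Transposition.transpose i (Suc i) l) = (a @ v # u # b) ! l"
    proof (cases "l < i")
      case True then show ?thesis using i by (simp add: nth_append transpose_def)
    next
      case False
      then have "i \<le> l" by simp
      then obtain r where r: "l = i + r" by (auto simp: le_iff_add)
      show ?thesis
      proof (cases r)
        case 0 then show ?thesis using i r by (simp add: nth_append)
      next
        case (Suc r')
        then show ?thesis using i r by (cases r') (simp_all add: nth_append transpose_def)
      qed
    qed
    ultimately show ?thesis by simp
  qed
qed simp

lemma pos4:
  fixes l i :: nat
  obtains "l < i" | "l = i" | "l = Suc i" | r where "l = Suc (Suc (i + r))"
proof -
  have "l < i \<or> l = i \<or> l = Suc i \<or> l = Suc (Suc (i + (l - Suc (Suc i))))" by arith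
  then show ?thesis using that by blast
qed

lemma pos3:
  fixes l i :: nat
  obtains "l < i" | "l = i" | r where "l = Suc (i + r)"
proof -
  have "l < i \<or> l = i \<or> l = Suc (i + (l - Suc i))" by arith
  then show ?thesis using that by blast
qed

context vector_space begin

lemma alt_transp:
  fixes g :: "'z list \<Rightarrow> 'b"
  assumes adj: "\<forall>a u v b. length a + length b + 2 = N \<longrightarrow> g (a @ v # u # b) = - g (a @ u # v # b)"
    and ab: "a < b" "b < N" and len: "length xs = N"
  shows "g (permute_list (Transposition.transpose a b) xs) = - g xs"
  using ab len
proof (induction b arbitrary: xs)
  case 0 then show ?case by simp
next
  case (Suc b)
  have adj1: "g (permute_list (Transposition.transpose i (Suc i)) ys) = - g ys"
    if "Suc i < N" "length ys = N" for i ys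
  proof -
    have ys: "take i ys @ ys ! i # ys ! Suc i # drop (Suc (Suc i)) ys = ys"
      using that by (simp add: Cons_nth_drop_Suc)
    have "permute_list (Transposition.transpose i (Suc i)) (take i ys @ ys ! i # ys ! Suc i # drop (Suc (Suc i)) ys)
        = take i ys @ ys ! Suc i # ys ! i # drop (Suc (Suc i)) ys"
      by (rule permute_adj) (use that in simp)
    then have pa: "permute_list (Transposition.transpose i (Suc i)) ys
        = take i ys @ ys ! Suc i # ys ! i # drop (Suc (Suc i)) ys"
      by (simp only: ys)
    have "g (take i ys @ ys ! Suc i # ys ! i # drop (Suc (Suc i)) ys)
       = - g (take i ys @ ys ! i # ys ! Suc i # drop (Suc (Suc i)) ys)"
      by (rule adj[rule_format]) (use that in simp)
    then show ?thesis unfolding pa ys .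
  qed
  show ?case
  proof (cases "a = b")
    case True then show ?thesis using adj1 Suc by simp
  next
    case False
    then have ab: "a < b" using Suc by simp
    have eq: "Transposition.transpose a (Suc b) =
       Transposition.transpose a b \<circ> Transposition.transpose b (Suc b) \<circ> Transposition.transpose a b"
      using ab by (simp add: transpose_comp_triple)
    have P1: "Transposition.transpose a b permutes {..<length xs}"
      using Suc ab by (intro permutes_swap_id) auto
    have P3: "Transposition.transpose b (Suc b) permutes {..<length xs}"
      using Suc ab by (intro permutes_swap_id) auto
    have "permute_list (Transposition.transpose a (Suc b)) xs =
      permute_list (Transposition.transpose a b) (permute_list (Transposition.transpose b (Suc b))
        (permute_list (Transposition.transpose a b) xs))"
      unfolding eq permute_list_compose[OF P1] permute_list_compose[OF P3] ..
    then have "g (permute_list (Transposition.transpose a (Suc b)) xs) =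
       - g (permute_list (Transposition.transpose b (Suc b)) (permute_list (Transposition.transpose a b) xs))"
      using Suc.IH[OF ab] Suc.prems by simp
    also have "\<dots> = g (permute_list (Transposition.transpose a b) xs)"
      using adj1[of b "permute_list (Transposition.transpose a b) xs"] Suc.prems by simp
    also have "\<dots> = - g xs" using Suc.IH[OF ab] Suc.prems by simp
    finally show ?thesis .
  qed
qed

lemma alt_from_adj:
  fixes g :: "'z list \<Rightarrow> 'b"
  assumes adj: "\<forall>a u v b. length a + length b + 2 = N \<longrightarrow> g (a @ v # u # b) = - g (a @ u # v # b)"
    and p: "p permutes {..<N}"
  shows "\<forall>xs. length xs = N \<longrightarrow> g (permute_list p xs) = scale (of_int (sign p)) (g xs)"
  using p finite_lessThan
proof (induction rule: permutes_induct)
  case id then show ?case by (simp add: sign_id)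
next
  case (swap a b p)
  show ?case
  proof (intro allI impI)
    fix xs :: "'z list" assume len: "length xs = N"
    have pp: "p permutes {..<length xs}" using swap len by simp
    have e1: "g (permute_list (Transposition.transpose a b \<circ> p) xs) =
        g (permute_list p (permute_list (Transposition.transpose a b) xs))"
      by (simp add: permute_list_compose[OF pp])
    have e2: "g (permute_list p (permute_list (Transposition.transpose a b) xs))
       = scale (of_int (sign p)) (g (permute_list (Transposition.transpose a b) xs))"
      using swap len by simp
    have e3: "g (permute_list (Transposition.transpose a b) xs) = - g xs"
    proof (cases "a < b")
      case True then show ?thesis using alt_transp[OF adj] swap len by auto
    next
      case False then have "b < a" using swap by simp
      then show ?thesis using alt_transp[OF adj, of b a] swap len by (simp add: transpose_commute)
    qed
    have e4: "sign (Transposition.transpose a b \<circ> p) = - sign p"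
    proof -
      have pp: "permutation p" using swap(4) finite_lessThan permutation_permutes by blast
      then show ?thesis using swap by (simp add: sign_compose[OF permutation_swap_id pp] sign_swap_id)
    qed
    show "g (permute_list (Transposition.transpose a b \<circ> p) xs) =
        scale (of_int (sign (Transposition.transpose a b \<circ> p))) (g xs)"
      unfolding e1 e2 e3 e4 of_int_minus scale_minus_left scale_minus_right ..
  qed
qed

end


lemma lin_add: "Vector_Spaces.linear s1 s2 h \<Longrightarrow> h (x + y) = h x + h y" by (simp add: Vector_Spaces.linear_iff)
lemma lin_scale: "Vector_Spaces.linear s1 s2 h \<Longrightarrow> h (s1 c x) = s2 c (h x)" by (simp add: Vector_Spaces.linear_iff)
lemma lin_neg: "Vector_Spaces.linear s1 s2 h \<Longrightarrow> h (- x) = - h x"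
proof -
  assume lin: "Vector_Spaces.linear s1 s2 h"
  then have vs1: "vector_space s1" and vs2: "vector_space s2" by (auto simp: Vector_Spaces.linear_iff)
  interpret V1: vector_space s1 by (fact vs1)
  interpret V2: vector_space s2 by (fact vs2)
  have "- x = s1 (-1) x" using V1.scale_minus_left[of 1 x] by simp
  then have "h (- x) = s2 (-1) (h x)" by (simp only:) (rule lin_scale[OF lin])
  also have "\<dots> = - h x" using V2.scale_minus_left[of 1] by simp
  finally show ?thesis .
qed

locale CEs = L: vector_space sL + B: vector_space sB
  for sL :: "'k::field \<Rightarrow> 'l::ab_group_add \<Rightarrow> 'l" and sB :: "'k \<Rightarrow> 'b::ab_group_add \<Rightarrow> 'b" +
  fixes \<phi> :: "'l \<Rightarrow> 'l \<Rightarrow> 'l" and \<psi> :: "'l \<Rightarrow> 'b \<Rightarrow> 'b" and f :: "'l list \<Rightarrow> 'b" and n :: nat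
  assumes bphi: "bilin sL sL sL \<phi>" and phi_alt: "\<And>x. \<phi> x x = 0"
    and bpsi: "bilin sL sB sB \<psi>" and altf: "Alt sL sB n f"
begin

lemma psi_neg2: "\<psi> x (- y) = - \<psi> x y"
proof -
  have "Vector_Spaces.linear sB sB (\<psi> x)" using bpsi unfolding bilin_def by blast
  then show ?thesis by (rule lin_neg)
qed

lemma phi_anti: "\<phi> y x = - \<phi> x y"
proof -
  have l1: "\<And>z. Vector_Spaces.linear sL sL (\<phi> z)" and l2: "\<And>z. Vector_Spaces.linear sL sL (\<lambda>x. \<phi> x z)"
    using bphi unfolding bilin_def by auto
  have "0 = \<phi> (x + y) (x + y)" by (simp add: phi_alt)
  also have "\<dots> = \<phi> x x + \<phi> x y + (\<phi> y x + \<phi> y y)"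
    using lin_add[OF l2, of x y "x + y"] lin_add[OF l1, of x x y] lin_add[OF l1, of y x y] by simp
  also have "\<dots> = \<phi> x y + \<phi> y x" by (simp add: phi_alt)
  finally show ?thesis by (simp add: eq_neg_iff_add_eq_0 add.commute)
qed

lemma f_first_neg: "length q + 1 = n \<Longrightarrow> f (- x # q) = - f (x # q)"
proof -
  assume ln: "length q + 1 = n"
  have H: "\<forall>xs ys. length xs + length ys + 1 = n \<longrightarrow> Vector_Spaces.linear sL sB (\<lambda>v. f (xs @ v # ys))"
    using altf unfolding Alt_def multilin_def by blast
  have "Vector_Spaces.linear sL sB (\<lambda>v. f ([] @ v # q))"
    using H[rule_format, of "[]" q] ln by simp
  from lin_neg[OF this] show ?thesis by simp
qed

lemma fsw: "length p + length q + 2 = n \<Longrightarrow> f (p @ v # u # q) = - f (p @ u # v # q)"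
proof -
  assume len: "length p + length q + 2 = n"
  have P: "Transposition.transpose (length p) (Suc (length p)) permutes {..<n}"
    using len by (intro permutes_swap_id) auto
  have "f (permute_list (Transposition.transpose (length p) (Suc (length p))) (p @ u # v # q))
     = sB (of_int (sign (Transposition.transpose (length p) (Suc (length p))))) (f (p @ u # v # q))"
  proof -
    have "\<forall>xs \<sigma>. length xs = n \<longrightarrow> \<sigma> permutes {..<n} \<longrightarrow> f (permute_list \<sigma> xs) = sB (of_int (sign \<sigma>)) (f xs)"
      using altf unfolding Alt_def by blast
    then show ?thesis using P len by simp
  qed
  then show ?thesis by (simp add: permute_adj sign_swap_id)
qed

definition "T1 zs l = sB ((-1) ^ l) (\<psi> (zs ! l) (f (rm1 zs l)))"
definition "T2 zs k j = sB ((-1) ^ (j + k)) (f (\<phi> (zs ! j) (zs ! k) # rm1 (rm1 zs k) j))"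

lemma CE_d_rm: "CE_d sB \<phi> \<psi> f zs = (\<Sum>l<length zs. T1 zs l) + (\<Sum>k<length zs. \<Sum>j<k. T2 zs k j)"
  unfolding CE_d_def T1_def T2_def nths_rm1
  by (intro arg_cong2[where f="(+)"] sum.cong refl) (simp_all add: nths_rm2)

end


context CEs begin

lemma T1_adj:
  assumes len: "length a + length b + 2 = Suc n" and l: "l < Suc n"
  shows "T1 (a @ v # u # b) l = - T1 (a @ u # v # b) (Transposition.transpose (length a) (Suc (length a)) l)"
proof -
  consider "l < length a" | "l = length a" | "l = Suc (length a)" | r where "l = Suc (Suc (length a + r))"
    by (rule pos4)
  then show ?thesis
  proof cases
    case 1
    have "f (rm1 a l @ v # u # b) = - f (rm1 a l @ u # v # b)"
      by (rule fsw) (use 1 len in simp)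
    then show ?thesis using 1 by (simp add: T1_def rm1_append nth_append psi_neg2 B.scale_minus_right)
  next
    case 2
    then show ?thesis by (simp add: T1_def rm1_append nth_append B.scale_minus_left)
  next
    case 3
    then show ?thesis by (simp add: T1_def rm1_append nth_append B.scale_minus_left)
  next
    case 4
    have "f (a @ v # u # rm1 b r) = - f (a @ u # v # rm1 b r)"
      by (rule fsw) (use 4 len l in simp)
    then show ?thesis using 4 by (simp add: T1_def rm1_append nth_append psi_neg2 B.scale_minus_right)
  qed
qed

end


context CEs begin

lemma T2_adj:
  assumes len: "length a + length b + 2 = Suc n" and k: "k < Suc n" and jk: "j < k"
  defines "s \<equiv> Transposition.transpose (length a) (Suc (length a))"
  shows "T2 (a @ v # u # b) k j = - (if k = Suc (length a) \<and> j = length a then T2 (a @ u # v # b) k j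
      else T2 (a @ u # v # b) (s k) (s j))"
proof -
  let ?i = "length a"
  consider "k < ?i" | "k = ?i" | "k = Suc ?i" | rk where "k = Suc (Suc (?i + rk))"
    by (rule pos4)
  then show ?thesis
  proof cases
    case 1
    have "f (\<phi> (a ! j) (a ! k) # rm1 (rm1 a k) j @ v # u # b) = - f (\<phi> (a ! j) (a ! k) # rm1 (rm1 a k) j @ u # v # b)"
      using fsw[of "\<phi> (a ! j) (a ! k) # rm1 (rm1 a k) j" b v u] 1 jk len by simp
    moreover have "j < length a - 1" using 1 jk by simp
    ultimately show ?thesis using 1 jk by (simp add: T2_def s_def rm1_append nth_append B.scale_minus_right)
  next
    case 2
    then show ?thesis using jk by (simp add: T2_def s_def rm1_append nth_append B.scale_minus_left)
  next
    case 3
    show ?thesis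
    proof (cases "j = ?i")
      case True
      have "f (\<phi> v u # a @ b) = - f (\<phi> u v # a @ b)"
        using f_first_neg[of "a @ b" "\<phi> u v"] len by (simp add: phi_anti[of v u])
      then show ?thesis using 3 True by (simp add: T2_def s_def rm1_append nth_append B.scale_minus_right)
    next
      case False
      then have "j < ?i" using 3 jk by simp
      then show ?thesis using 3 by (simp add: T2_def s_def rm1_append nth_append B.scale_minus_left)
    qed
  next
    case 4
    have rk: "rk < length b" using 4 k len by simp
    consider "j < ?i" | "j = ?i" | "j = Suc ?i" | rj where "j = Suc (Suc (?i + rj))"
      by (rule pos4)
    then show ?thesis
    proof cases
      case 1
      have "f (\<phi> (a ! j) (b ! rk) # rm1 a j @ v # u # rm1 b rk) = - f (\<phi> (a ! j) (b ! rk) # rm1 a j @ u # v # rm1 b rk)"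
        using fsw[of "\<phi> (a ! j) (b ! rk) # rm1 a j" "rm1 b rk" v u] 1 rk len by simp
      then show ?thesis using 1 4 by (simp add: T2_def s_def rm1_append nth_append B.scale_minus_right)
    next
      case 2
      then show ?thesis using 4 by (simp add: T2_def s_def rm1_append nth_append B.scale_minus_left)
    next
      case 3
      then show ?thesis using 4 by (simp add: T2_def s_def rm1_append nth_append B.scale_minus_left)
    next
      case 5: 4
      have rj: "rj < rk" using 4 5 jk by simp
      have "f (\<phi> (b ! rj) (b ! rk) # a @ v # u # rm1 (rm1 b rk) rj) = - f (\<phi> (b ! rj) (b ! rk) # a @ u # v # rm1 (rm1 b rk) rj)"
        using fsw[of "\<phi> (b ! rj) (b ! rk) # a" "rm1 (rm1 b rk) rj" v u] rj rk len by simp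
      then show ?thesis using 4 5 rj rk by (simp add: T2_def s_def rm1_append nth_append B.scale_minus_right)
    qed
  qed
qed

end


context CEs begin

lemma CE_adj:
  assumes len: "length a + length b + 2 = Suc n"
  shows "CE_d sB \<phi> \<psi> f (a @ v # u # b) = - CE_d sB \<phi> \<psi> f (a @ u # v # b)"
proof -
  let ?i = "length a"
  define s where "s = Transposition.transpose ?i (Suc ?i)"
  let ?ws = "a @ v # u # b" and ?zs = "a @ u # v # b"
  have lw: "length ?ws = Suc n" and lz: "length ?zs = Suc n" using len by simp_all
  have sp: "s permutes {..<Suc n}" unfolding s_def using len by (intro permutes_swap_id) auto
  have S1: "(\<Sum>l<Suc n. T1 ?ws l) = - (\<Sum>l<Suc n. T1 ?zs l)"
  proof -
    have "(\<Sum>l<Suc n. T1 ?ws l) = (\<Sum>l<Suc n. - T1 ?zs (s l))"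
      using T1_adj[OF len] unfolding s_def by (intro sum.cong) auto
    also have "\<dots> = - (\<Sum>l<Suc n. (T1 ?zs \<circ> s) l)" by (simp add: sum_negf)
    also have "(\<Sum>l<Suc n. (T1 ?zs \<circ> s) l) = (\<Sum>l<Suc n. T1 ?zs l)"
      using sum.permute[OF sp, of "T1 ?zs"] by simp
    finally show ?thesis .
  qed
  define P where "P = Sigma {..<Suc n} (\<lambda>k. {..<k})"
  define \<tau> where "\<tau> = (\<lambda>(k, j). if k = Suc ?i \<and> j = ?i then (k, j) else (s k, s j))"
  have sD: "s x = (if x = ?i then Suc ?i else if x = Suc ?i then ?i else x)" for x
    unfolding s_def by (simp add: transpose_def)
  have Si: "Suc ?i < Suc n" using len by simp
  have \<tau>1: "\<tau> (\<tau> p) = p" if "p \<in> P" for p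
    using that Si unfolding \<tau>_def P_def by (auto simp: sD split: if_splits)
  have \<tau>2: "\<tau> p \<in> P" if "p \<in> P" for p
    using that Si unfolding \<tau>_def P_def by (auto simp: sD split: if_splits)
  have fin: "finite P" unfolding P_def by auto
  have Sig: "(\<Sum>k<Suc n. \<Sum>j<k. g k j) = (\<Sum>(k, j)\<in>P. g k j)" for g :: "nat \<Rightarrow> nat \<Rightarrow> 'b"
    unfolding P_def by (rule sum.Sigma) auto
  have S2: "(\<Sum>(k, j)\<in>P. T2 ?ws k j) = - (\<Sum>(k, j)\<in>P. T2 ?zs k j)"
  proof -
    have "(\<Sum>(k, j)\<in>P. T2 ?ws k j) = (\<Sum>p\<in>P. - (case p of (k, j) \<Rightarrow> T2 ?zs k j))"
    proof (rule sum.reindex_bij_witness[where i=\<tau> and j=\<tau>])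
      fix p assume p: "p \<in> P"
      then obtain k j where kj: "p = (k, j)" "j < k" "k < Suc n" unfolding P_def by auto
      show "- (case \<tau> p of (k, j) \<Rightarrow> T2 ?zs k j) = (case p of (k, j) \<Rightarrow> T2 ?ws k j)"
        using T2_adj[OF len kj(3) kj(2), of v u] kj unfolding \<tau>_def s_def by auto
    qed (auto simp: \<tau>1 \<tau>2)
    also have "\<dots> = - (\<Sum>(k, j)\<in>P. T2 ?zs k j)" by (simp add: sum_negf)
    finally show ?thesis .
  qed
  show ?thesis
    unfolding CE_d_rm lw lz Sig S1 S2 by simp
qed

lemma CE_alt: "Alt sL sB (Suc n) (CE_d sB \<phi> \<psi> f) \<longleftrightarrow> multilin sL sB (Suc n) (CE_d sB \<phi> \<psi> f)"
proof -
  have adj: "\<forall>a u v b. length a + length b + 2 = Suc n \<longrightarrow>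
      CE_d sB \<phi> \<psi> f (a @ v # u # b) = - CE_d sB \<phi> \<psi> f (a @ u # v # b)"
    using CE_adj by blast
  show ?thesis unfolding Alt_def using B.alt_from_adj[OF adj] by blast
qed

end


lemma lin_compI: "Vector_Spaces.linear s1 s2 h \<Longrightarrow> Vector_Spaces.linear s2 s3 g \<Longrightarrow> Vector_Spaces.linear s1 s3 (\<lambda>x. g (h x))"
  using Vector_Spaces.linear_compose[of s1 s2 h s3 g] by (simp add: o_def)

lemma lin_scaleI: "Vector_Spaces.linear s1 s2 h \<Longrightarrow> Vector_Spaces.linear s1 s2 (\<lambda>x. s2 c (h x))"
proof -
  assume lin: "Vector_Spaces.linear s1 s2 h"
  then have vs2: "vector_space s2" by (auto simp: Vector_Spaces.linear_iff)
  interpret V2: vector_space s2 by (fact vs2)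
  show ?thesis using lin unfolding Vector_Spaces.linear_iff
    by (auto simp: V2.scale_right_distrib mult.commute)
qed

lemma lin_addI: "Vector_Spaces.linear s1 s2 g \<Longrightarrow> Vector_Spaces.linear s1 s2 h \<Longrightarrow> Vector_Spaces.linear s1 s2 (\<lambda>x. g x + h x)"
proof -
  assume lin: "Vector_Spaces.linear s1 s2 g" "Vector_Spaces.linear s1 s2 h"
  then have vs2: "vector_space s2" by (auto simp: Vector_Spaces.linear_iff)
  interpret V2: vector_space s2 by (fact vs2)
  show ?thesis using lin unfolding Vector_Spaces.linear_iff
    by (auto simp: V2.scale_right_distrib algebra_simps)
qed

lemma lin_zeroI: "vector_space s1 \<Longrightarrow> vector_space s2 \<Longrightarrow> Vector_Spaces.linear s1 s2 (\<lambda>x. 0)"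
proof -
  assume vs1: "vector_space s1" and vs2: "vector_space s2"
  interpret V2: vector_space s2 by (fact vs2)
  show ?thesis using vs1 vs2 unfolding Vector_Spaces.linear_iff by auto
qed

lemma lin_sumI:
  assumes "vector_space s1" "vector_space s2" "\<And>i. i \<in> A \<Longrightarrow> Vector_Spaces.linear s1 s2 (g i)"
  shows "Vector_Spaces.linear s1 s2 (\<lambda>x. \<Sum>i\<in>A. g i x)"
proof (cases "finite A")
  case True
  then show ?thesis using assms(3)
    by (induction A rule: finite_induct) (auto intro!: lin_addI lin_zeroI assms(1,2))
next
  case False then show ?thesis by (simp add: lin_zeroI assms(1,2))
qed

context CEs begin

lemma f_slot: "length p + length q + 1 = n \<Longrightarrow> Vector_Spaces.linear sL sB (\<lambda>v. f (p @ v # q))"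
proof -
  assume l: "length p + length q + 1 = n"
  have "\<forall>xs ys. length xs + length ys + 1 = n \<longrightarrow> Vector_Spaces.linear sL sB (\<lambda>v. f (xs @ v # ys))"
    using altf unfolding Alt_def multilin_def by blast
  then show ?thesis using l by blast
qed

lemma psi1: "Vector_Spaces.linear sL sB (\<lambda>x. \<psi> x y)" using bpsi unfolding bilin_def by auto
lemma psi2: "Vector_Spaces.linear sB sB (\<psi> x)" using bpsi unfolding bilin_def by auto
lemma phi1: "Vector_Spaces.linear sL sL (\<lambda>x. \<phi> x y)" using bphi unfolding bilin_def by auto
lemma phi2: "Vector_Spaces.linear sL sL (\<phi> x)" using bphi unfolding bilin_def by auto

lemma T1_lin:
  assumes len: "length xs + length ys + 1 = Suc n" and l: "l < Suc n"
  shows "Vector_Spaces.linear sL sB (\<lambda>v. T1 (xs @ v # ys) l)"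
proof -
  consider "l < length xs" | "l = length xs" | r where "l = Suc (length xs + r)"
    by (rule pos3)
  then show ?thesis
  proof cases
    case 1
    have "(\<lambda>v. T1 (xs @ v # ys) l) = (\<lambda>v. sB ((-1)^l) (\<psi> (xs ! l) (f (rm1 xs l @ v # ys))))"
      using 1 by (simp add: T1_def rm1_append nth_append)
    moreover have "Vector_Spaces.linear sL sB (\<lambda>v. f (rm1 xs l @ v # ys))"
      by (rule f_slot) (use 1 len in simp)
    ultimately show ?thesis by (simp only:) (rule lin_scaleI, rule lin_compI[OF _ psi2])
  next
    case 2
    have "(\<lambda>v. T1 (xs @ v # ys) l) = (\<lambda>v. sB ((-1)^l) (\<psi> v (f (xs @ ys))))"
      using 2 by (simp add: T1_def rm1_append nth_append)
    then show ?thesis by (simp only:) (rule lin_scaleI, rule psi1)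
  next
    case 3
    have r: "r < length ys" using 3 l len by simp
    have "(\<lambda>v. T1 (xs @ v # ys) l) = (\<lambda>v. sB ((-1)^l) (\<psi> (ys ! r) (f (xs @ v # rm1 ys r))))"
      using 3 by (simp add: T1_def rm1_append nth_append)
    moreover have "Vector_Spaces.linear sL sB (\<lambda>v. f (xs @ v # rm1 ys r))"
      by (rule f_slot) (use r len in simp)
    ultimately show ?thesis by (simp only:) (rule lin_scaleI, rule lin_compI[OF _ psi2])
  qed
qed

lemma T2_lin:
  assumes len: "length xs + length ys + 1 = Suc n" and k: "k < Suc n" and jk: "j < k"
  shows "Vector_Spaces.linear sL sB (\<lambda>v. T2 (xs @ v # ys) k j)"
proof -
  let ?e = "sB ((-1) ^ (j + k))"
  consider "k < length xs" | "k = length xs" | rk where "k = Suc (length xs + rk)"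
    by (rule pos3)
  then show ?thesis
  proof cases
    case 1
    have "(\<lambda>v. T2 (xs @ v # ys) k j) = (\<lambda>v. ?e (f ((\<phi> (xs ! j) (xs ! k) # rm1 (rm1 xs k) j) @ v # ys)))"
      using 1 jk by (simp add: T2_def rm1_append nth_append less_diff_conv)
    moreover have "Vector_Spaces.linear sL sB (\<lambda>v. f ((\<phi> (xs ! j) (xs ! k) # rm1 (rm1 xs k) j) @ v # ys))"
      by (rule f_slot) (use 1 jk len in simp)
    ultimately show ?thesis by (simp only:) (rule lin_scaleI)
  next
    case 2
    have "(\<lambda>v. T2 (xs @ v # ys) k j) = (\<lambda>v. ?e (f ([] @ \<phi> (xs ! j) v # (rm1 xs j @ ys))))"
      using 2 jk by (simp add: T2_def rm1_append nth_append)
    moreover have "Vector_Spaces.linear sL sB (\<lambda>v. f ([] @ v # (rm1 xs j @ ys)))"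
      by (rule f_slot) (use 2 jk len in simp)
    ultimately show ?thesis by (simp only:) (rule lin_scaleI, rule lin_compI[OF phi2])
  next
    case 3
    have rk: "rk < length ys" using 3 k len by simp
    consider "j < length xs" | "j = length xs" | rj where "j = Suc (length xs + rj)"
      by (rule pos3)
    then show ?thesis
    proof cases
      case 1
      have "(\<lambda>v. T2 (xs @ v # ys) k j) = (\<lambda>v. ?e (f ((\<phi> (xs ! j) (ys ! rk) # rm1 xs j) @ v # rm1 ys rk)))"
        using 1 3 by (simp add: T2_def rm1_append nth_append)
      moreover have "Vector_Spaces.linear sL sB (\<lambda>v. f ((\<phi> (xs ! j) (ys ! rk) # rm1 xs j) @ v # rm1 ys rk))"
        by (rule f_slot) (use 1 rk len in simp)
      ultimately show ?thesis by (simp only:) (rule lin_scaleI)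
    next
      case 2
      have "(\<lambda>v. T2 (xs @ v # ys) k j) = (\<lambda>v. ?e (f ([] @ \<phi> v (ys ! rk) # (xs @ rm1 ys rk))))"
        using 2 3 by (simp add: T2_def rm1_append nth_append)
      moreover have "Vector_Spaces.linear sL sB (\<lambda>v. f ([] @ v # (xs @ rm1 ys rk)))"
        by (rule f_slot) (use rk len in simp)
      ultimately show ?thesis by (simp only:) (rule lin_scaleI, rule lin_compI[OF phi1])
    next
      case 4: 3
      have rj: "rj < rk" using 3 4 jk by simp
      have "(\<lambda>v. T2 (xs @ v # ys) k j) = (\<lambda>v. ?e (f ((\<phi> (ys ! rj) (ys ! rk) # xs) @ v # rm1 (rm1 ys rk) rj)))"
        using 3 4 rj rk by (simp add: T2_def rm1_append nth_append)
      moreover have "Vector_Spaces.linear sL sB (\<lambda>v. f ((\<phi> (ys ! rj) (ys ! rk) # xs) @ v # rm1 (rm1 ys rk) rj))"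
        by (rule f_slot) (use rj rk len in simp)
      ultimately show ?thesis by (simp only:) (rule lin_scaleI)
    qed
  qed
qed

lemma CE_multilin: "multilin sL sB (Suc n) (CE_d sB \<phi> \<psi> f)"
  unfolding multilin_def
proof (intro allI impI)
  fix xs ys :: "'l list" assume len: "length xs + length ys + 1 = Suc n"
  have "(\<lambda>v. CE_d sB \<phi> \<psi> f (xs @ v # ys)) =
     (\<lambda>v. (\<Sum>l<Suc n. T1 (xs @ v # ys) l) + (\<Sum>k<Suc n. \<Sum>j<k. T2 (xs @ v # ys) k j))"
    using len by (simp add: CE_d_rm)
  moreover have "Vector_Spaces.linear sL sB (\<lambda>v. (\<Sum>l<Suc n. T1 (xs @ v # ys) l) + (\<Sum>k<Suc n. \<Sum>j<k. T2 (xs @ v # ys) k j))"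
    by (intro lin_addI lin_sumI T1_lin T2_lin L.vector_space_axioms B.vector_space_axioms len) auto
  ultimately show "Vector_Spaces.linear sL sB (\<lambda>v. CE_d sB \<phi> \<psi> f (xs @ v # ys))" by simp
qed

lemma CE_Alt: "Alt sL sB (Suc n) (CE_d sB \<phi> \<psi> f)"
  using CE_alt CE_multilin by simp

end


primrec cyc :: "nat \<Rightarrow> nat \<Rightarrow> nat \<Rightarrow> nat" where
  "cyc b 0 = id"
| "cyc b (Suc m) = Transposition.transpose (b + m) (Suc (b + m)) \<circ> cyc b m"

lemma cyc_apply: "cyc b m l = (if l < b then l else if l = b then b + m else if l \<le> b + m then l - 1 else l)"
  by (induction m) (auto simp: transpose_def)

lemma cyc_permutes: "b + m < N \<Longrightarrow> cyc b m permutes {..<N}"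
  by (induction m) (auto intro!: permutes_compose permutes_swap_id simp: permutes_id)

lemma cyc_permutation: "permutation (cyc b m)"
proof (induction m)
  case 0 show ?case by (simp add: permutation_id)
next
  case (Suc m) show ?case unfolding cyc.simps by (rule permutation_compose[OF permutation_swap_id Suc.IH])
qed

lemma sign_cyc: "sign (cyc b m) = (-1) ^ m"
proof (induction m)
  case 0 show ?case by (simp add: sign_id)
next
  case (Suc m) show ?case
    unfolding cyc.simps sign_compose[OF permutation_swap_id cyc_permutation] sign_swap_id Suc.IH by simp
qed

lemma perm_unique:
  fixes \<sigma> \<tau> :: "nat \<Rightarrow> nat"
  assumes s: "\<sigma> permutes {..<N}" and t: "\<tau> permutes {..<N}"
    and agree: "\<And>l. l < p \<Longrightarrow> \<sigma> l = \<tau> l"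
    and ms: "\<And>l l'. p \<le> l \<Longrightarrow> l < l' \<Longrightarrow> l' < N \<Longrightarrow> \<sigma> l < \<sigma> l'"
    and mt: "\<And>l l'. p \<le> l \<Longrightarrow> l < l' \<Longrightarrow> l' < N \<Longrightarrow> \<tau> l < \<tau> l'"
  shows "\<sigma> = \<tau>"
proof -
  have key: False if st: "\<sigma> permutes {..<N}" "\<tau> permutes {..<N}"
    and ag: "\<And>l. l < p \<Longrightarrow> \<sigma> l = \<tau> l"
    and m2: "\<And>l l'. p \<le> l \<Longrightarrow> l < l' \<Longrightarrow> l' < N \<Longrightarrow> \<tau> l < \<tau> l'"
    and l: "l < N" and less: "\<sigma> l < \<tau> l" and minl: "\<And>l'. l' < l \<Longrightarrow> \<sigma> l' = \<tau> l'"
    for \<sigma> \<tau> :: "nat \<Rightarrow> nat" and l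
  proof -
    have pl: "p \<le> l"
    proof (rule ccontr)
      assume "\<not> p \<le> l"
      then have "l < p" by simp
      then have "\<sigma> l = \<tau> l" by (rule ag)
      with less show False by simp
    qed
    have sl: "\<sigma> l < N" using permutes_in_image[OF st(1)] l by simp
    obtain l' where l'e0: "\<sigma> l = \<tau> l'"
      using surjD[OF permutes_surj[OF st(2)], of "\<sigma> l"] by blast
    then have l'e: "\<tau> l' = \<sigma> l" by simp
    have l'N: "l' < N"
    proof (rule ccontr)
      assume "\<not> l' < N"
      then have "\<tau> l' = l'" using permutes_not_in[OF st(2)] by simp
      then show False using l'e sl \<open>\<not> l' < N\<close> by simp
    qed
    have "l' \<noteq> l" using l'e less by auto
    moreover have "\<not> l' < l"
    proof
      assume "l' < l"
      then have "\<sigma> l' = \<sigma> l" using minl l'e by simp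
      moreover have "inj \<sigma>" using permutes_inj[OF st(1)] .
      ultimately have "l' = l" by (blast dest: injD)
      then show False using \<open>l' < l\<close> by simp
    qed
    moreover have "\<not> l < l'"
    proof
      assume "l < l'"
      then have "\<tau> l < \<tau> l'" using m2 pl l'N by blast
      then show False using l'e less by simp
    qed
    ultimately show False by simp
  qed
  show ?thesis
  proof (rule ccontr)
    assume "\<sigma> \<noteq> \<tau>"
    then obtain x where "\<sigma> x \<noteq> \<tau> x" by auto
    then have ex: "\<exists>x. \<sigma> x \<noteq> \<tau> x" by blast
    define l where "l = (LEAST x. \<sigma> x \<noteq> \<tau> x)"
    have ne: "\<sigma> l \<noteq> \<tau> l" unfolding l_def using ex by (rule LeastI_ex)
    have minl: "\<And>l'. l' < l \<Longrightarrow> \<sigma> l' = \<tau> l'" unfolding l_def using not_less_Least by blast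
    have lN: "l < N"
    proof (rule ccontr)
      assume "\<not> l < N"
      then have "\<sigma> l = l" "\<tau> l = l" using permutes_not_in[OF s] permutes_not_in[OF t] by simp_all
      then show False using ne by simp
    qed
    show False
    proof (cases "\<sigma> l < \<tau> l")
      case True
      show False by (rule key[OF s t agree mt lN True minl])
    next
      case False
      then have tl: "\<tau> l < \<sigma> l" using ne by simp
      have ag': "\<And>l. l < p \<Longrightarrow> \<tau> l = \<sigma> l" using agree by (simp add: eq_commute)
      have mi': "\<And>l'. l' < l \<Longrightarrow> \<tau> l' = \<sigma> l'" using minl by (simp add: eq_commute)
      show False by (rule key[OF t s ag' ms lN tl mi'])
    qed
  qed
qed

definition "dd j k = cyc 0 j \<circ> cyc 1 (k - 1)"

lemma dd_apply: "j < k \<Longrightarrow> dd j k l = (if l = 0 then j else if l = 1 then k else if l < j + 2 then l - 2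
   else if l < k + 1 then l - 1 else l)"
  by (auto simp: dd_def cyc_apply)

lemma unshuffles1: "unshuffles 1 n = (\<lambda>i. cyc 0 i) ` {..<Suc n}"
proof
  show "(\<lambda>i. cyc 0 i) ` {..<Suc n} \<subseteq> unshuffles 1 n"
    by (auto simp: unshuffles_def cyc_permutes cyc_apply)
next
  show "unshuffles 1 n \<subseteq> (\<lambda>i. cyc 0 i) ` {..<Suc n}"
  proof
    fix \<sigma> assume s: "\<sigma> \<in> unshuffles 1 n"
    then have sp: "\<sigma> permutes {..<Suc n}" by (simp add: unshuffles_def)
    have i: "\<sigma> 0 < Suc n" using permutes_in_image[OF sp] by simp
    have cp: "cyc 0 (\<sigma> 0) permutes {..<Suc n}" using i by (intro cyc_permutes) simp
    have "\<sigma> = cyc 0 (\<sigma> 0)"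
      by (rule perm_unique[OF sp cp, where p=1]) (use s i in \<open>auto simp: unshuffles_def cyc_apply\<close>)
    then show "\<sigma> \<in> (\<lambda>i. cyc 0 i) ` {..<Suc n}" using i by blast
  qed
qed

lemma unshuffles2: "0 < n \<Longrightarrow> unshuffles 2 (n - 1) = (\<lambda>(k, j). dd j k) ` Sigma {..<Suc n} (\<lambda>k. {..<k})"
proof
  assume n: "0 < n"
  have ddp: "dd j k permutes {..<Suc n}" if "j < k" "k < Suc n" for j k
    unfolding dd_def using that by (intro permutes_compose cyc_permutes) auto
  show "(\<lambda>(k, j). dd j k) ` Sigma {..<Suc n} (\<lambda>k. {..<k}) \<subseteq> unshuffles 2 (n - 1)"
    using n ddp by (auto simp: unshuffles_def dd_apply)
next
  assume n: "0 < n"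
  have ddp: "dd j k permutes {..<Suc n}" if "j < k" "k < Suc n" for j k
    unfolding dd_def using that by (intro permutes_compose cyc_permutes) auto
  show "unshuffles 2 (n - 1) \<subseteq> (\<lambda>(k, j). dd j k) ` Sigma {..<Suc n} (\<lambda>k. {..<k})"
  proof
    fix \<sigma> assume s: "\<sigma> \<in> unshuffles 2 (n - 1)"
    then have sp: "\<sigma> permutes {..<Suc n}" using n by (simp add: unshuffles_def)
    have jk: "\<sigma> 0 < \<sigma> 1" using s by (simp add: unshuffles_def)
    have k: "\<sigma> 1 < Suc n" using permutes_in_image[OF sp] n by simp
    have "\<sigma> = dd (\<sigma> 0) (\<sigma> 1)"
      by (rule perm_unique[OF sp ddp[OF jk k], of 2]) (use s n jk in \<open>auto simp: unshuffles_def dd_apply less_2_cases_iff\<close>)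
    then show "\<sigma> \<in> (\<lambda>(k, j). dd j k) ` Sigma {..<Suc n} (\<lambda>k. {..<k})" using jk k by force
  qed
qed

lemma sign_dd: "j < k \<Longrightarrow> sign (dd j k) = (-1) ^ j * (-1) ^ (k - 1)"
  unfolding dd_def by (simp add: sign_compose[OF cyc_permutation cyc_permutation] sign_cyc)



lemma sum_list_neg: "sum_list (map (\<lambda>t. - g t) xs) = - sum_list (map g xs :: 'a::ab_group_add list)"
  by (induction xs) simp_all

lemma sum_list_swap: "(\<Sum>x\<in>A. sum_list (map (g x) TS)) = sum_list (map (\<lambda>t. \<Sum>x\<in>A. g x t) TS)"
  by (induction TS) (simp_all add: sum.distrib)

lemma cyc_list: "i < N \<Longrightarrow> map (\<lambda>l. Y (cyc 0 i l)) [0..<N] = Y i # rm1 (map Y [0..<N]) i"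
proof (rule nth_equalityI)
  assume i: "i < N"
  show "length (map (\<lambda>l. Y (cyc 0 i l)) [0..<N]) = length (Y i # rm1 (map Y [0..<N]) i)" using i by simp
  fix l assume "l < length (map (\<lambda>l. Y (cyc 0 i l)) [0..<N])"
  then have l: "l < N" by simp
  show "map (\<lambda>l. Y (cyc 0 i l)) [0..<N] ! l = (Y i # rm1 (map Y [0..<N]) i) ! l"
  proof (cases l)
    case 0 then show ?thesis using l by (simp add: cyc_apply)
  next
    case (Suc l')
    have l': "l' < N - 1" using l Suc by simp
    have L: "map (\<lambda>l. Y (cyc 0 i l)) [0..<N] ! l = Y (cyc 0 i (Suc l'))" using l Suc by simp
    have C: "cyc 0 i (Suc l') = (if l' < i then l' else Suc l')" by (simp add: cyc_apply)
    have R1: "(Y i # rm1 (map Y [0..<N]) i) ! l = rm1 (map Y [0..<N]) i ! l'" using Suc by simp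
    have R2: "rm1 (map Y [0..<N]) i ! l' = (if l' < i then map Y [0..<N] ! l' else map Y [0..<N] ! Suc l')"
      using l' i by (intro nth_rm1) auto
    show ?thesis unfolding L C R1 R2 using l' by auto
  qed
qed

lemma dd_list: "j < k \<Longrightarrow> k < N \<Longrightarrow>
   map (\<lambda>l. Y (dd j k l)) [0..<N] = Y j # Y k # rm1 (rm1 (map Y [0..<N]) k) j"
proof (rule nth_equalityI)
  assume jk: "j < k" and k: "k < N"
  show "length (map (\<lambda>l. Y (dd j k l)) [0..<N]) = length (Y j # Y k # rm1 (rm1 (map Y [0..<N]) k) j)"
    using jk k by simp
  fix l assume "l < length (map (\<lambda>l. Y (dd j k l)) [0..<N])"
  then have l: "l < N" by simp
  show "map (\<lambda>l. Y (dd j k l)) [0..<N] ! l = (Y j # Y k # rm1 (rm1 (map Y [0..<N]) k) j) ! l"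
  proof (cases l)
    case 0 then show ?thesis using l jk by (simp add: dd_apply)
  next
    case (Suc l')
    show ?thesis
    proof (cases l')
      case 0 then show ?thesis using Suc l jk by (simp add: dd_apply)
    next
      case (Suc l'')
      have "rm1 (rm1 (map Y [0..<N]) k) j ! l'' = (if l'' < j then Y l'' else if Suc l'' < k then Y (Suc l'') else Y (Suc (Suc l'')))"
        using l jk k \<open>l = Suc l'\<close> Suc by (auto simp: nth_rm1)
      then show ?thesis using \<open>l = Suc l'\<close> Suc l jk by (simp add: dd_apply)
    qed
  qed
qed

context CEs begin

lemma scale_sum_list: "sB e (sum_list (map h TS)) = sum_list (map (\<lambda>t. sB e (h t)) TS)"
  by (induction TS) (simp_all add: B.scale_right_distrib)

lemma tw_cyc:
  fixes gs :: "('c \<Rightarrow> 'l) list"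
  assumes len: "length gs = Suc n" and i: "i < Suc n"
  shows "twisted \<Delta> (\<lambda>ys. \<psi> (hd ys) (f (tl ys))) (cyc 0 i) (permute_list (cyc 0 i) gs) c =
    sum_list (map (\<lambda>ts. \<psi> ((gs ! i) (ts ! i)) (f (rm1 (map (\<lambda>l. (gs ! l) (ts ! l)) [0..<Suc n]) i))) (iter_coprod \<Delta> n c))"
proof -
  have P: "cyc 0 i permutes {..<length gs}" using len i by (intro cyc_permutes) simp
  have eq: "map (\<lambda>l. (permute_list (cyc 0 i) gs ! l) (ts ! cyc 0 i l)) [0..<Suc n] = (gs ! i) (ts ! i) # rm1 (map (\<lambda>l. (gs ! l) (ts ! l)) [0..<Suc n]) i" for ts :: "'c list"
  proof -
    have "map (\<lambda>l. (permute_list (cyc 0 i) gs ! l) (ts ! cyc 0 i l)) [0..<Suc n]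
        = map (\<lambda>l. (\<lambda>l. (gs ! l) (ts ! l)) (cyc 0 i l)) [0..<Suc n]"
    proof (rule map_cong[OF refl])
      fix l assume "l \<in> set [0..<Suc n]"
      then have "l < length gs" using len by auto
      then show "(permute_list (cyc 0 i) gs ! l) (ts ! cyc 0 i l) = (\<lambda>l. (gs ! l) (ts ! l)) (cyc 0 i l)"
        by (simp add: permute_list_nth[OF P])
    qed
    also have "\<dots> = (gs ! i) (ts ! i) # rm1 (map (\<lambda>l. (gs ! l) (ts ! l)) [0..<Suc n]) i" by (rule cyc_list[OF i])
    finally show ?thesis .
  qed
  show ?thesis unfolding twisted_def length_permute_list len eq by simp
qed

lemma tw_dd:
  fixes gs :: "('c \<Rightarrow> 'l) list"
  assumes len: "length gs = Suc n" and jk: "j < k" and k: "k < Suc n"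
  shows "twisted \<Delta> (\<lambda>ys. f (\<phi> (ys ! 0) (ys ! 1) # drop 2 ys)) (dd j k) (permute_list (dd j k) gs) c =
    sum_list (map (\<lambda>ts. f (\<phi> ((gs ! j) (ts ! j)) ((gs ! k) (ts ! k)) #
       rm1 (rm1 (map (\<lambda>l. (gs ! l) (ts ! l)) [0..<Suc n]) k) j)) (iter_coprod \<Delta> n c))"
proof -
  have P: "dd j k permutes {..<length gs}" unfolding dd_def using len jk k
    by (intro permutes_compose cyc_permutes) auto
  have eq: "map (\<lambda>l. (permute_list (dd j k) gs ! l) (ts ! dd j k l)) [0..<Suc n] = (gs ! j) (ts ! j) # (gs ! k) (ts ! k) # rm1 (rm1 (map (\<lambda>l. (gs ! l) (ts ! l)) [0..<Suc n]) k) j" for ts :: "'c list"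
  proof -
    have "map (\<lambda>l. (permute_list (dd j k) gs ! l) (ts ! dd j k l)) [0..<Suc n]
        = map (\<lambda>l. (\<lambda>l. (gs ! l) (ts ! l)) (dd j k l)) [0..<Suc n]"
    proof (rule map_cong[OF refl])
      fix l assume "l \<in> set [0..<Suc n]"
      then have "l < length gs" using len by auto
      then show "(permute_list (dd j k) gs ! l) (ts ! dd j k l) = (\<lambda>l. (gs ! l) (ts ! l)) (dd j k l)"
        by (simp add: permute_list_nth[OF P])
    qed
    also have "\<dots> = (gs ! j) (ts ! j) # (gs ! k) (ts ! k) # rm1 (rm1 (map (\<lambda>l. (gs ! l) (ts ! l)) [0..<Suc n]) k) j" by (rule dd_list[OF jk k])
    finally show ?thesis .
  qed
  show ?thesis unfolding twisted_def length_permute_list len eq by simp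
qed

lemma part2:
  fixes gs :: "('c \<Rightarrow> 'l) list"
  assumes len: "length gs = Suc n"
  shows "delta_F sB \<Delta> \<phi> \<psi> n f gs c = induced \<Delta> (CE_d sB \<phi> \<psi> f) gs c"
proof -
  define TS where "TS = iter_coprod \<Delta> n c"
  define Lst where "Lst = (\<lambda>ts :: 'c list. map (\<lambda>l. (gs ! l) (ts ! l)) [0..<Suc n])"
  define P where "P = Sigma {..<Suc n} (\<lambda>k. {..<k})"
  have finP: "finite P" unfolding P_def by auto
  have lenL: "length (Lst ts) = Suc n" for ts :: "'c list" unfolding Lst_def by simp
  have LstD: "map (\<lambda>l. (gs ! l) (ts ! l)) [0..<Suc n] = Lst ts" for ts :: "'c list" unfolding Lst_def by simp
  have nthL: "l < Suc n \<Longrightarrow> Lst ts ! l = (gs ! l) (ts ! l)" for ts :: "'c list" and l unfolding Lst_def by (simp del: upt_Suc)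
  have ind: "induced \<Delta> (CE_d sB \<phi> \<psi> f) gs c = sum_list (map (\<lambda>ts. CE_d sB \<phi> \<psi> f (Lst ts)) TS)"
    unfolding induced_def TS_def Lst_def len by simp
  have ce: "CE_d sB \<phi> \<psi> f (Lst ts) = (\<Sum>i<Suc n. T1 (Lst ts) i) + (\<Sum>(k, j)\<in>P. T2 (Lst ts) k j)" for ts
  proof -
    have Sig: "(\<Sum>k<Suc n. \<Sum>j<k. g k j) = (\<Sum>(k, j)\<in>P. g k j)" for g :: "nat \<Rightarrow> nat \<Rightarrow> 'b"
      unfolding P_def by (rule sum.Sigma) auto
    show ?thesis unfolding CE_d_rm lenL Sig ..
  qed
  have inj1: "inj_on (\<lambda>i. cyc 0 i) {..<Suc n}"
  proof (rule inj_onI)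
    fix x y assume "x \<in> {..<Suc n}" "y \<in> {..<Suc n}" "cyc 0 x = cyc 0 y"
    then have "cyc 0 x 0 = cyc 0 y 0" by simp
    then show "x = y" by (simp add: cyc_apply)
  qed
  have A: "(\<Sum>\<sigma>\<in>unshuffles 1 n. sB (of_int (sign \<sigma>))
        (twisted \<Delta> (\<lambda>ys. \<psi> (hd ys) (f (tl ys))) \<sigma> (permute_list \<sigma> gs) c))
      = sum_list (map (\<lambda>ts. \<Sum>i<Suc n. T1 (Lst ts) i) TS)"
  proof -
    have "(\<Sum>\<sigma>\<in>unshuffles 1 n. sB (of_int (sign \<sigma>))
        (twisted \<Delta> (\<lambda>ys. \<psi> (hd ys) (f (tl ys))) \<sigma> (permute_list \<sigma> gs) c))
      = (\<Sum>i<Suc n. sB (of_int (sign (cyc 0 i)))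
        (twisted \<Delta> (\<lambda>ys. \<psi> (hd ys) (f (tl ys))) (cyc 0 i) (permute_list (cyc 0 i) gs) c))"
      unfolding unshuffles1 by (simp add: sum.reindex[OF inj1])
    also have "\<dots> = (\<Sum>i<Suc n. sum_list (map (\<lambda>ts. T1 (Lst ts) i) TS))"
    proof (rule sum.cong[OF refl])
      fix i assume "i \<in> {..<Suc n}"
      then have i: "i < Suc n" by simp
      show "sB (of_int (sign (cyc 0 i)))
        (twisted \<Delta> (\<lambda>ys. \<psi> (hd ys) (f (tl ys))) (cyc 0 i) (permute_list (cyc 0 i) gs) c)
        = sum_list (map (\<lambda>ts. T1 (Lst ts) i) TS)"
        unfolding tw_cyc[OF len i] sign_cyc scale_sum_list T1_def TS_def
        using i by (simp add: nthL LstD del: upt_Suc)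
    qed
    also have "\<dots> = sum_list (map (\<lambda>ts. \<Sum>i<Suc n. T1 (Lst ts) i) TS)" by (rule sum_list_swap)
    finally show ?thesis .
  qed
  have B: "(\<Sum>\<sigma>\<in>unshuffles 2 (n - 1). sB (of_int (sign \<sigma>))
        (twisted \<Delta> (\<lambda>ys. f (\<phi> (ys ! 0) (ys ! 1) # drop 2 ys)) \<sigma> (permute_list \<sigma> gs) c))
      = - sum_list (map (\<lambda>ts. \<Sum>(k, j)\<in>P. T2 (Lst ts) k j) TS)" if n0: "0 < n"
  proof -
    have inj2: "inj_on (\<lambda>(k, j). dd j k) P"
    proof (rule inj_onI)
      fix x y assume x: "x \<in> P" and y: "y \<in> P" and e: "(case x of (k, j) \<Rightarrow> dd j k) = (case y of (k, j) \<Rightarrow> dd j k)"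
      obtain k j k' j' where xy: "x = (k, j)" "y = (k', j')" "j < k" "j' < k'" using x y unfolding P_def by auto
      have "dd j k 0 = dd j' k' 0" "dd j k 1 = dd j' k' 1" using e xy by auto
      then show "x = y" using xy by (simp add: dd_apply)
    qed
    have "(\<Sum>\<sigma>\<in>unshuffles 2 (n - 1). sB (of_int (sign \<sigma>))
        (twisted \<Delta> (\<lambda>ys. f (\<phi> (ys ! 0) (ys ! 1) # drop 2 ys)) \<sigma> (permute_list \<sigma> gs) c))
      = (\<Sum>(k, j)\<in>P. sB (of_int (sign (dd j k)))
        (twisted \<Delta> (\<lambda>ys. f (\<phi> (ys ! 0) (ys ! 1) # drop 2 ys)) (dd j k) (permute_list (dd j k) gs) c))"
      unfolding unshuffles2[OF n0] P_def[symmetric] sum.reindex[OF inj2]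
      by (simp add: case_prod_unfold comp_def)
    also have "\<dots> = (\<Sum>(k, j)\<in>P. - sum_list (map (\<lambda>ts. T2 (Lst ts) k j) TS))"
    proof (rule sum.cong[OF refl])
      fix x assume "x \<in> P"
      then obtain k j where x: "x = (k, j)" and jk: "j < k" and k: "k < Suc n" unfolding P_def by auto
      have sg: "(-1) ^ (j + k) = - ((-1) ^ j * (-1) ^ (k - 1) :: 'k)"
        using jk by (cases k) (auto simp: power_add)
      show "(case x of (k, j) \<Rightarrow> sB (of_int (sign (dd j k)))
        (twisted \<Delta> (\<lambda>ys. f (\<phi> (ys ! 0) (ys ! 1) # drop 2 ys)) (dd j k) (permute_list (dd j k) gs) c))
        = (case x of (k, j) \<Rightarrow> - sum_list (map (\<lambda>ts. T2 (Lst ts) k j) TS))"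
        unfolding x prod.case tw_dd[OF len jk k] sign_dd[OF jk] scale_sum_list T2_def TS_def sg
        using jk k by (simp add: nthL LstD sum_list_neg del: upt_Suc)
    qed
    also have "\<dots> = - (\<Sum>(k, j)\<in>P. sum_list (map (\<lambda>ts. T2 (Lst ts) k j) TS))"
      by (simp add: sum_negf case_prod_unfold)
    also have "(\<Sum>(k, j)\<in>P. sum_list (map (\<lambda>ts. T2 (Lst ts) k j) TS)) = sum_list (map (\<lambda>ts. \<Sum>(k, j)\<in>P. T2 (Lst ts) k j) TS)"
      using sum_list_swap[where g="\<lambda>(k, j) ts. T2 (Lst ts) k j" and A=P and TS=TS] by (simp add: case_prod_unfold)
    finally show ?thesis .
  qed
  have P0: "n = 0 \<Longrightarrow> P = {}" unfolding P_def by auto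
  show ?thesis
  proof (cases "n = 0")
    case True
    then show ?thesis unfolding delta_F_def A ind ce using P0 by (simp add: sum_list_addf)
  next
    case False
    then show ?thesis unfolding delta_F_def A ind ce using B by (simp add: sum_list_addf)
  qed
qed

lemma part3:
  fixes gs :: "('c \<Rightarrow> 'l) list"
  assumes len: "length gs = Suc n" and sp: "\<sigma> permutes {..<Suc n}"
  shows "delta_F sB \<Delta> \<phi> \<psi> n f (permute_list \<sigma> gs) c
     = sB (of_int (sign \<sigma>)) (twisted \<Delta> (CE_d sB \<phi> \<psi> f) (inv \<sigma>) gs c)"
proof -
  define Y where "Y = (\<lambda>ts :: 'c list. map (\<lambda>i. (gs ! i) (ts ! inv \<sigma> i)) [0..<Suc n])"
  have pY: "permute_list \<sigma> (Y ts) = map (\<lambda>i. (permute_list \<sigma> gs ! i) (ts ! i)) [0..<Suc n]" for ts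
  proof -
    have lenY: "length (Y ts) = Suc n" by (simp add: Y_def)
    have "permute_list \<sigma> (Y ts) = map (\<lambda>i. Y ts ! \<sigma> i) [0..<Suc n]"
      unfolding permute_list_def lenY ..
    also have "\<dots> = map (\<lambda>i. (permute_list \<sigma> gs ! i) (ts ! i)) [0..<Suc n]"
    proof (rule map_cong[OF refl])
      fix i assume "i \<in> set [0..<Suc n]"
      then have i: "i < Suc n" by auto
      then have si: "\<sigma> i < Suc n" using permutes_in_image[OF sp] by simp
      show "Y ts ! \<sigma> i = (permute_list \<sigma> gs ! i) (ts ! i)"
        using si i len sp by (simp add: Y_def permute_list_nth permutes_inverses(2) del: upt_Suc)
    qed
    finally show ?thesis .
  qed
  have alt: "CE_d sB \<phi> \<psi> f (permute_list \<sigma> (Y ts)) = sB (of_int (sign \<sigma>)) (CE_d sB \<phi> \<psi> f (Y ts))" for ts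
    using CE_Alt sp unfolding Alt_def by (simp add: Y_def)
  have "delta_F sB \<Delta> \<phi> \<psi> n f (permute_list \<sigma> gs) c = induced \<Delta> (CE_d sB \<phi> \<psi> f) (permute_list \<sigma> gs) c"
    by (rule part2) (simp add: len)
  also have "\<dots> = sum_list (map (\<lambda>ts. CE_d sB \<phi> \<psi> f (permute_list \<sigma> (Y ts))) (iter_coprod \<Delta> n c))"
    unfolding induced_def pY using len by simp
  also have "\<dots> = sum_list (map (\<lambda>ts. sB (of_int (sign \<sigma>)) (CE_d sB \<phi> \<psi> f (Y ts))) (iter_coprod \<Delta> n c))"
    by (simp only: alt)
  also have "\<dots> = sB (of_int (sign \<sigma>)) (sum_list (map (\<lambda>ts. CE_d sB \<phi> \<psi> f (Y ts)) (iter_coprod \<Delta> n c)))"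
    by (simp only: scale_sum_list)
  also have "\<dots> = sB (of_int (sign \<sigma>)) (twisted \<Delta> (CE_d sB \<phi> \<psi> f) (inv \<sigma>) gs c)"
    unfolding twisted_def Y_def using len by (simp del: upt_Suc)
  finally show ?thesis .
qed

end


theorem proposition6:
  fixes sC :: "'k::field \<Rightarrow> 'c::ab_group_add \<Rightarrow> 'c"
    and sL :: "'k \<Rightarrow> 'l::ab_group_add \<Rightarrow> 'l"
    and sB :: "'k \<Rightarrow> 'b::ab_group_add \<Rightarrow> 'b"
    and \<Delta> :: "'c \<Rightarrow> ('c \<times> 'c) list"
    and \<phi> :: "'l \<Rightarrow> 'l \<Rightarrow> 'l"
    and \<psi> :: "'l \<Rightarrow> 'b \<Rightarrow> 'b"
    and f :: "'l list \<Rightarrow> 'b"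
    and n :: nat
  assumes "coassoc_coalgebra sC \<Delta>"
    and "lie_algebra sL \<phi>"
    and "lie_module sL sB \<phi> \<psi>"
    and "Alt sL sB n f"
  shows "Alt sL sB (Suc n) (CE_d sB \<phi> \<psi> f)
    \<and> (\<forall>gs. length gs = Suc n \<longrightarrow> (\<forall>g\<in>set gs. Vector_Spaces.linear sC sL g) \<longrightarrow>
          (\<forall>c. delta_F sB \<Delta> \<phi> \<psi> n f gs c = induced \<Delta> (CE_d sB \<phi> \<psi> f) gs c))
    \<and> TD_skew sC sL sB \<Delta> (Suc n) (CE_d sB \<phi> \<psi> f) (delta_F sB \<Delta> \<phi> \<psi> n f)"
proof -
  have vsL: "vector_space sL" and bphi: "bilin sL sL sL \<phi>" and phi_alt: "\<forall>x. \<phi> x x = 0"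
    using assms(2) unfolding lie_algebra_def by auto
  have vsB: "vector_space sB" and bpsi: "bilin sL sB sB \<psi>"
    using assms(3) unfolding lie_module_def by auto
  have "CEs sL sB \<phi> \<psi> f n"
    unfolding CEs_def CEs_axioms_def using vsL vsB bphi phi_alt bpsi assms(4) by auto
  then interpret C: CEs sL sB \<phi> \<psi> f n .
  have A: "Alt sL sB (Suc n) (CE_d sB \<phi> \<psi> f)" by (rule C.CE_Alt)
  have P2: "\<forall>gs. length gs = Suc n \<longrightarrow> (\<forall>g\<in>set gs. Vector_Spaces.linear sC sL g) \<longrightarrow>
          (\<forall>c. delta_F sB \<Delta> \<phi> \<psi> n f gs c = induced \<Delta> (CE_d sB \<phi> \<psi> f) gs c)"
  proof (intro allI impI)
    fix gs :: "('c \<Rightarrow> 'l) list" and c :: 'c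
    assume "length gs = Suc n"
    then show "delta_F sB \<Delta> \<phi> \<psi> n f gs c = induced \<Delta> (CE_d sB \<phi> \<psi> f) gs c" by (rule C.part2)
  qed
  have TD: "TD_skew sC sL sB \<Delta> (Suc n) (CE_d sB \<phi> \<psi> f) (delta_F sB \<Delta> \<phi> \<psi> n f)"
    unfolding TD_skew_def
  proof (intro conjI allI impI)
    show "multilin sL sB (Suc n) (CE_d sB \<phi> \<psi> f)" using A unfolding Alt_def by blast
  next
    fix gs :: "('c \<Rightarrow> 'l) list" and c :: 'c
    assume "length gs = Suc n"
    then show "delta_F sB \<Delta> \<phi> \<psi> n f gs c = induced \<Delta> (CE_d sB \<phi> \<psi> f) gs c" by (rule C.part2)
  next
    fix gs :: "('c \<Rightarrow> 'l) list" and \<sigma> and c :: 'c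
    assume "length gs = Suc n" "\<sigma> permutes {..<Suc n}"
    then show "delta_F sB \<Delta> \<phi> \<psi> n f (permute_list \<sigma> gs) c =
        sB (of_int (sign \<sigma>)) (twisted \<Delta> (CE_d sB \<phi> \<psi> f) (inv \<sigma>) gs c)"
      by (rule C.part3)
  qed
  show ?thesis using A P2 TD by blast
qed

end
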